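(* Let $\mathcal{H}_0,\mathcal{H}_1,\mathcal{H}_2$ be finite-dimensional Hilbert spaces, and let $\varrho_{1|0}\in\mathcal{L}(\mathcal{H}_0\otimes\mathcal{H}_1)$, $\varrho_{2|0}\in\mathcal{L}(\mathcal{H}_0\otimes\mathcal{H}_2)$ be the Choi–Jamiołkowski operators of CPTP maps $\mathcal{N}_{1|0}:\mathcal{L}(\mathcal{H}_0)\to\mathcal{L}(\mathcal{H}_1)$ and $\mathcal{N}_{2|0}:\mathcal{L}(\mathcal{H}_0)\to\mathcal{L}(\mathcal{H}_2)$. Consider the optimization problem $$\sup\ \mathrm{Tr}[W\varrho_{2|0}]+\mathrm{Tr}[\Lambda]$$ over $W\in\mathcal{L}(\mathcal{H}_0\otimes\mathcal{H}_2)$, $\Psi_0,\Psi_1\in\mathcal{L}(\mathcal{H}_0)$, $\Lambda\in\mathcal{L}(\mathcal{H}_1)$ subject to $$\begin{bmatrix}\Psi_0\otimes\mathbb{1}_{\mathcal{H}_2} & W\\ W^\dagger & \Psi_1\otimes\mathbb{1}_{\mathcal{H}_2}\end{bmatrix}\geq 0,\qquad \mathrm{Tr}[\Psi_0]=\mathrm{Tr}[\Psi_1]=1,$$ $$\Lambda\otimes\mathbb{1}_{\mathcal{H}_2}\leq-\mathrm{Tr}_{\mathcal{H}_0}\!\left[\big((\varrho_{1|0})^{T_{\mathcal{H}_1}}\otimes\mathbb{1}_{\mathcal{H}_2}\big)\big(W\otimes\mathbb{1}_{\mathcal{H}_1}\big)\right].$$ If there exists a CPTP map $\mathcal{N}_{2|1}:\mathcal{L}(\mathcal{H}_1)\to\mathcal{L}(\mathcal{H}_2)$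 with $\mathcal{N}_{2|0}=\mathcal{N}_{2|1}\circ\mathcal{N}_{1|0}$, then every feasible point $(W,\Psi_0,\Psi_1,\Lambda)$ satisfies $\mathrm{Tr}[W\varrho_{2|0}]+\mathrm{Tr}[\Lambda]\leq 0$; i.e. the optimal value of the problem is at most $0$.
   Context: Fix orthonormal bases of all Hilbert spaces; transpositions are with respect to them. For a linear map $\mathcal{N}:\mathcal{L}(\mathcal{H}_{\rm in})\to\mathcal{L}(\mathcal{H}_{\rm out})$, its Choi–Jamiołkowski operator is $\varrho_{\mathcal{N}}=\sum_{a,b}|a\rangle\langle b|\otimes\mathcal{N}(|a\rangle\langle b|)\in\mathcal{L}(\mathcal{H}_{\rm in}\otimes\mathcal{H}_{\rm out})$. $T_{\mathcal{H}_1}$ is partial transposition on the $\mathcal{H}_1$ factor; $(\varrho_{1|0})^{T_{\mathcal{H}_1}}\otimes\mathbb{1}_{\mathcal{H}_2}$ and $W\otimes\mathbb{1}_{\mathcal{H}_1}$ (meaning $W$ acting on the $\mathcal{H}_0\otimes\mathcal{H}_2$ factors and the identity on $\mathcal{H}_1$) are regarded as operators on $\mathcal{H}_0\otimes\mathcal{H}_1\otimes\mathcal{H}_2$, and $\mathrm{Tr}_{\mathcal{H}_0}$ is the partial trace over $\mathcal{H}_0$, giving an operator on $\mathcal{H}_1\otimes\mathcal{H}_2$. Operator inequalities $A\le B$ mean $B-A$ is Hermitian positive semidefinite. *)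

theory Defs
  imports Complex_Main "HOL-Library.Complex_Order"
begin

text \<open>Operators on a finite-dimensional Hilbert space with a fixed orthonormal basis
  indexed by a finite type 'a are represented by their matrices  'a => 'a => complex.
  Tensor products of spaces correspond to product index types.\<close>

type_synonym 'a op = "'a \<Rightarrow> 'a \<Rightarrow> complex"

definition hermitian_on :: "'a set \<Rightarrow> 'a op \<Rightarrow> bool" where
  "hermitian_on S A \<longleftrightarrow> (\<forall>i\<in>S. \<forall>j\<in>S. A i j = cnj (A j i))"

definition psd_on :: "'a set \<Rightarrow> 'a op \<Rightarrow> bool" where
  "psd_on S A \<longleftrightarrow> hermitian_on S A \<and>
     (\<forall>v :: 'a \<Rightarrow> complex. 0 \<le> Re (\<Sum>i\<in>S. \<Sum>j\<in>S. cnj (v i) * A i j * v j))"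

definition psd :: "('a::finite) op \<Rightarrow> bool" where
  "psd A \<longleftrightarrow> psd_on UNIV A"

definition op_le :: "('a::finite) op \<Rightarrow> 'a op \<Rightarrow> bool" where
  "op_le A B \<longleftrightarrow> psd (\<lambda>i j. B i j - A i j)"

definition tr :: "('a::finite) op \<Rightarrow> complex" where
  "tr A = (\<Sum>i\<in>UNIV. A i i)"

definition mmult :: "('a::finite) op \<Rightarrow> 'a op \<Rightarrow> 'a op" where
  "mmult A B = (\<lambda>i j. \<Sum>k\<in>UNIV. A i k * B k j)"

definition adj :: "'a op \<Rightarrow> 'a op" where
  "adj A = (\<lambda>i j. cnj (A j i))"

definition ident :: "'a op" where
  "ident = (\<lambda>i j. if i = j then 1 else 0)"

definition tensor :: "'a op \<Rightarrow> 'b op \<Rightarrow> ('a \<times> 'b) op" where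
  "tensor A B = (\<lambda>(i, k) (j, l). A i j * B k l)"

definition linear_map :: "('a op \<Rightarrow> 'b op) \<Rightarrow> bool" where
  "linear_map N \<longleftrightarrow>
     (\<forall>c X Y. N (\<lambda>i j. c * X i j + Y i j) = (\<lambda>i j. c * N X i j + N Y i j))"

text \<open>id_k (x) N applied to an operator on C^k (x) H_in (ancilla basis {0..<k}),
  acting blockwise.\<close>
definition ampl :: "('a op \<Rightarrow> 'b op) \<Rightarrow> (nat \<times> 'a) op \<Rightarrow> (nat \<times> 'b) op" where
  "ampl N X = (\<lambda>(i, b) (j, b'). N (\<lambda>a a'. X (i, a) (j, a')) b b')"

definition completely_positive :: "(('a::finite) op \<Rightarrow> ('b::finite) op) \<Rightarrow> bool" where
  "completely_positive N \<longleftrightarrow>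
     (\<forall>k::nat. \<forall>X. psd_on ({..<k} \<times> UNIV) X \<longrightarrow> psd_on ({..<k} \<times> UNIV) (ampl N X))"

definition trace_preserving :: "(('a::finite) op \<Rightarrow> ('b::finite) op) \<Rightarrow> bool" where
  "trace_preserving N \<longleftrightarrow> (\<forall>X. tr (N X) = tr X)"

definition CPTP :: "(('a::finite) op \<Rightarrow> ('b::finite) op) \<Rightarrow> bool" where
  "CPTP N \<longleftrightarrow> linear_map N \<and> completely_positive N \<and> trace_preserving N"

definition choi :: "('a op \<Rightarrow> 'b op) \<Rightarrow> ('a \<times> 'b) op" where
  "choi N = (\<lambda>(a, x) (b, y). N (\<lambda>i j. if i = a \<and> j = b then 1 else 0) x y)"

definition ptranspose2 :: "('a \<times> 'b) op \<Rightarrow> ('a \<times> 'b) op" where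
  "ptranspose2 R = (\<lambda>(a, b) (a', b'). R (a, b') (a', b))"

text \<open>(rho^{T_H1} (x) 1_H2) on H0 (x) H1 (x) H2, indices (a, b, c).\<close>
definition ext_rho :: "('a \<times> 'b) op \<Rightarrow> ('a \<times> 'b \<times> 'c) op" where
  "ext_rho R = (\<lambda>(a, b, c) (a', b', c'). ptranspose2 R (a, b) (a', b') * ident c c')"

text \<open>W (x) 1_H1, W acting on H0 (x) H2 factors, regarded on H0 (x) H1 (x) H2.\<close>
definition ext_W :: "('a \<times> 'c) op \<Rightarrow> ('a \<times> 'b \<times> 'c) op" where
  "ext_W W = (\<lambda>(a, b, c) (a', b', c'). W (a, c) (a', c') * ident b b')"

definition ptrace0 :: "(('a::finite) \<times> 'b \<times> 'c) op \<Rightarrow> ('b \<times> 'c) op" where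
  "ptrace0 M = (\<lambda>(b, c) (b', c'). \<Sum>a\<in>UNIV. M (a, b, c) (a, b', c'))"

definition block :: "'a op \<Rightarrow> 'a op \<Rightarrow> 'a op \<Rightarrow> 'a op \<Rightarrow> ('a + 'a) op" where
  "block A B C D = (\<lambda>x y. case (x, y) of
       (Inl i, Inl j) \<Rightarrow> A i j | (Inl i, Inr j) \<Rightarrow> B i j
     | (Inr i, Inl j) \<Rightarrow> C i j | (Inr i, Inr j) \<Rightarrow> D i j)"

end

theory Submission
  imports Defs
begin

lemma lin_zero: "linear_map N \<Longrightarrow> N (\<lambda>i j. 0) = (\<lambda>i j. 0)"
proof -
  assume "linear_map N"
  then have h: "\<forall>c X Y. N (\<lambda>i j. c * X i j + Y i j) = (\<lambda>i j. c * N X i j + N Y i j)"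
    unfolding linear_map_def by blast
  show ?thesis using h[rule_format, of "-1" "\<lambda>i j. 0" "\<lambda>i j. 0"] by simp
qed

lemma lin_scale: "linear_map N \<Longrightarrow> N (\<lambda>i j. c * X i j) = (\<lambda>i j. c * N X i j)"
proof -
  assume a: "linear_map N"
  then have h: "\<forall>c X Y. N (\<lambda>i j. c * X i j + Y i j) = (\<lambda>i j. c * N X i j + N Y i j)"
    unfolding linear_map_def by blast
  show ?thesis using h[rule_format, of c X "\<lambda>i j. 0"] lin_zero[OF a] by simp
qed

lemma lin_add: "linear_map N \<Longrightarrow> N (\<lambda>i j. X i j + Y i j) = (\<lambda>i j. N X i j + N Y i j)"
proof -
  assume a: "linear_map N"
  then have h: "\<forall>c X Y. N (\<lambda>i j. c * X i j + Y i j) = (\<lambda>i j. c * N X i j + N Y i j)"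
    unfolding linear_map_def by blast
  show ?thesis using h[rule_format, of 1 X Y] by simp
qed

lemma lin_sum:
  assumes lin: "linear_map N" and fin: "finite K"
  shows "N (\<lambda>i j. \<Sum>k\<in>K. f k i j) = (\<lambda>i j. \<Sum>k\<in>K. N (f k) i j)"
  using fin
proof (induction K rule: finite_induct)
  case empty
  then show ?case using lin_zero[OF lin] by simp
next
  case (insert x F)
  have "N (\<lambda>i j. \<Sum>k\<in>insert x F. f k i j) = N (\<lambda>i j. f x i j + (\<lambda>i j. \<Sum>k\<in>F. f k i j) i j)"
    using insert by simp
  also have "\<dots> = (\<lambda>i j. N (f x) i j + N (\<lambda>i j. \<Sum>k\<in>F. f k i j) i j)"
    by (rule lin_add[OF lin])
  finally show ?case using insert by simp
qed

lemma delta2: "(\<Sum>b\<in>UNIV. \<Sum>b'\<in>UNIV. Z b b' * (if i = b \<and> j = b' then 1 else 0)) = (Z i j :: complex)" for Z :: "('a::finite) op"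
proof -
  have "\<And>b. (\<Sum>b'\<in>UNIV. Z b b' * (if i = b \<and> j = b' then 1 else 0)) = (if i = b then Z b j else 0)"
    by (auto simp: if_distrib cong: if_cong)
  then show ?thesis by (simp add: sum.delta' sum.delta)
qed

lemma expand:
  assumes "linear_map N"
  shows "N (Z :: ('a::finite) op) = (\<lambda>x y. \<Sum>b\<in>UNIV. \<Sum>b'\<in>UNIV. Z b b' * N (\<lambda>i j. if i = b \<and> j = b' then 1 else 0) x y)"
proof -
  have Z: "Z = (\<lambda>i j. \<Sum>b\<in>UNIV. (\<lambda>b i j. \<Sum>b'\<in>UNIV. (\<lambda>b' i j. Z b b' * (if i = b \<and> j = b' then 1 else 0)) b' i j) b i j)"
    by (simp add: delta2)
  have "N Z = (\<lambda>x y. \<Sum>b\<in>UNIV. N (\<lambda>i j. \<Sum>b'\<in>UNIV. (\<lambda>b' i j. Z b b' * (if i = b \<and> j = b' then 1 else 0)) b' i j) x y)"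
    by (subst Z, subst lin_sum[OF assms], simp_all)
  also have "\<dots> = (\<lambda>x y. \<Sum>b\<in>UNIV. \<Sum>b'\<in>UNIV. N (\<lambda>i j. Z b b' * (if i = b \<and> j = b' then 1 else 0)) x y)"
    by (subst lin_sum[OF assms], simp_all)
  also have "\<dots> = (\<lambda>x y. \<Sum>b\<in>UNIV. \<Sum>b'\<in>UNIV. Z b b' * N (\<lambda>i j. if i = b \<and> j = b' then 1 else 0) x y)"
    by (subst lin_scale[OF assms], simp)
  finally show ?thesis .
qed

lemma cnj_eq_Im: "cnj z = z \<Longrightarrow> Im z = 0"
  by (metis cnj.sel(2) add.inverse_unique add.commute add_cancel_right_left neg_equal_zero)

lemma psd_quad:
  assumes "psd_on S A"
  shows "0 \<le> (\<Sum>i\<in>S. \<Sum>j\<in>S. cnj (v i) * A i j * v j)"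
proof -
  let ?q = "(\<Sum>i\<in>S. \<Sum>j\<in>S. cnj (v i) * A i j * v j)"
  have re: "0 \<le> Re ?q" using assms unfolding psd_on_def by blast
  have h: "\<And>i j. i \<in> S \<Longrightarrow> j \<in> S \<Longrightarrow> cnj (A i j) = A j i"
    using assms unfolding psd_on_def hermitian_on_def by (metis complex_cnj_cnj)
  have "cnj ?q = (\<Sum>i\<in>S. \<Sum>j\<in>S. v i * cnj (A i j) * cnj (v j))"
    by (simp add: cnj_sum)
  also have "\<dots> = (\<Sum>i\<in>S. \<Sum>j\<in>S. v i * A j i * cnj (v j))"
    by (intro sum.cong refl) (simp add: h)
  also have "\<dots> = (\<Sum>j\<in>S. \<Sum>i\<in>S. v i * A j i * cnj (v j))"
    by (rule sum.swap)
  also have "\<dots> = ?q"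
    by (intro sum.cong refl) (simp add: mult.commute mult.left_commute)
  finally have "cnj ?q = ?q" .
  then have "Im ?q = 0" by (rule cnj_eq_Im)
  then show ?thesis using re by (simp add: less_eq_complex_def)
qed

lemma psd_transpose:
  assumes "psd_on S A"
  shows "psd_on S (\<lambda>i j. A j i)"
  unfolding psd_on_def
proof (intro conjI allI)
  show "hermitian_on S (\<lambda>i j. A j i)"
    using assms unfolding psd_on_def hermitian_on_def by blast
  fix v :: "'a \<Rightarrow> complex"
  have "(\<Sum>i\<in>S. \<Sum>j\<in>S. cnj (v i) * A j i * v j) = (\<Sum>j\<in>S. \<Sum>i\<in>S. cnj (v i) * A j i * v j)"
    by (rule sum.swap)
  also have "\<dots> = (\<Sum>j\<in>S. \<Sum>i\<in>S. cnj ((\<lambda>x. cnj (v x)) j) * A j i * (\<lambda>x. cnj (v x)) i)"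
    by (intro sum.cong refl) (simp add: mult.commute mult.left_commute)
  finally have eq: "(\<Sum>i\<in>S. \<Sum>j\<in>S. cnj (v i) * A j i * v j) = (\<Sum>j\<in>S. \<Sum>i\<in>S. cnj ((\<lambda>x. cnj (v x)) j) * A j i * (\<lambda>x. cnj (v x)) i)" .
  have H: "0 \<le> Re (\<Sum>j\<in>S. \<Sum>i\<in>S. cnj (w j) * A j i * w i)" for w
    using assms unfolding psd_on_def by blast
  show "0 \<le> Re (\<Sum>i\<in>S. \<Sum>j\<in>S. cnj (v i) * A j i * v j)" using H[of "\<lambda>x. cnj (v x)"] eq by simp
qed

lemma psd_reindex:
  assumes "psd_on S A" and bij: "bij_betw f T S"
  shows "psd_on T (\<lambda>i j. A (f i) (f j))"
  unfolding psd_on_def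
proof (intro conjI allI)
  have fT: "\<And>i. i \<in> T \<Longrightarrow> f i \<in> S" using bij bij_betwE by blast
  show "hermitian_on T (\<lambda>i j. A (f i) (f j))"
    using assms fT unfolding psd_on_def hermitian_on_def by blast
  fix v :: "'b \<Rightarrow> complex"
  define u where "u = (\<lambda>y. v (inv_into T f y))"
  have vu: "\<And>i. i \<in> T \<Longrightarrow> v i = u (f i)"
    unfolding u_def using bij by (simp add: bij_betw_def)
  have "(\<Sum>i\<in>T. \<Sum>j\<in>T. cnj (v i) * A (f i) (f j) * v j)
      = (\<Sum>i\<in>T. \<Sum>j\<in>T. cnj (u (f i)) * A (f i) (f j) * u (f j))"
    by (intro sum.cong refl) (simp add: vu)
  also have "\<dots> = (\<Sum>i\<in>T. \<Sum>z\<in>S. cnj (u (f i)) * A (f i) z * u z)"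
    by (intro sum.cong refl sum.reindex_bij_betw[OF bij])
  also have "\<dots> = (\<Sum>y\<in>S. \<Sum>z\<in>S. cnj (u y) * A y z * u z)"
    by (rule sum.reindex_bij_betw[OF bij, where g = "\<lambda>y. \<Sum>z\<in>S. cnj (u y) * A y z * u z"])
  finally have eq: "(\<Sum>i\<in>T. \<Sum>j\<in>T. cnj (v i) * A (f i) (f j) * v j) = (\<Sum>y\<in>S. \<Sum>z\<in>S. cnj (u y) * A y z * u z)" .
  have "0 \<le> Re (\<Sum>y\<in>S. \<Sum>z\<in>S. cnj (u y) * A y z * u z)"
    using assms unfolding psd_on_def by blast
  then show "0 \<le> Re (\<Sum>i\<in>T. \<Sum>j\<in>T. cnj (v i) * A (f i) (f j) * v j)" by (simp only: eq)
qed

lemma sel_sum: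
  fixes Y :: "(nat \<times> 'c::finite) op"
  shows "(\<Sum>i\<in>A \<times> UNIV. \<Sum>j\<in>A \<times> UNIV. cnj ((\<lambda>(n, x). if x = d n then 1 else 0) i) * Y i j * (\<lambda>(n, x). if x = d n then 1 else 0) j)
     = (\<Sum>n\<in>A. \<Sum>n'\<in>A. Y (n, d n) (n', d n'))"
proof -
  have one: "(\<Sum>j\<in>A \<times> (UNIV::'c set). if snd j = d (fst j) then h j else 0) = (\<Sum>n\<in>A. h (n, d n))"
    for h :: "nat \<times> 'c \<Rightarrow> complex"
  proof -
    have "(\<Sum>j\<in>A \<times> (UNIV::'c set). if snd j = d (fst j) then h j else 0)
        = (\<Sum>n\<in>A. \<Sum>x\<in>UNIV. if x = d n then h (n, x) else 0)"
    proof -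
      have e: "(\<lambda>j. if snd j = d (fst j) then h j else 0) = (\<lambda>(n, x). if x = d n then h (n, x) else 0)"
        by auto
      show ?thesis unfolding e by (rule sum.cartesian_product[symmetric])
    qed
    also have "\<dots> = (\<Sum>n\<in>A. h (n, d n))" by (simp add: sum.delta)
    finally show ?thesis .
  qed
  have "(\<Sum>i\<in>A \<times> UNIV. \<Sum>j\<in>A \<times> UNIV. cnj ((\<lambda>(n, x). if x = d n then 1 else 0) i) * Y i j * (\<lambda>(n, x). if x = d n then 1 else 0) j)
     = (\<Sum>i\<in>A \<times> (UNIV::'c set). \<Sum>j\<in>A \<times> (UNIV::'c set). if snd i = d (fst i) then (if snd j = d (fst j) then Y i j else 0) else 0)"
    by (intro sum.cong refl) (auto simp: split_beta)
  also have "\<dots> = (\<Sum>i\<in>A \<times> (UNIV::'c set). if snd i = d (fst i) then (\<Sum>j\<in>A \<times> (UNIV::'c set). if snd j = d (fst j) then Y i j else 0) else 0)"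
    by (intro sum.cong refl) simp
  also have "\<dots> = (\<Sum>n\<in>A. \<Sum>n'\<in>A. Y (n, d n) (n', d n'))"
    by (simp add: one)
  finally show ?thesis .
qed

lemma cp_quad:
  fixes N :: "('b::finite) op \<Rightarrow> ('c::finite) op" and Q :: "('b \<times> 'c) op"
  assumes cp: "completely_positive N" and Q: "psd Q"
  shows "0 \<le> (\<Sum>c\<in>UNIV. \<Sum>c'\<in>UNIV. N (\<lambda>b b'. Q (b', c') (b, c)) c c')"
proof -
  define k where "k = card (UNIV :: 'c set)"
  obtain dec where dec: "bij_betw dec {0..<k} (UNIV :: 'c set)"
    using ex_bij_betw_nat_finite finite_UNIV unfolding k_def by blast
  have dec': "bij_betw dec {..<k} UNIV" using dec by (simp add: atLeast0LessThan)
  define f :: "nat \<times> 'b \<Rightarrow> 'b \<times> 'c" where "f = (\<lambda>(n, b). (b, dec n))"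
  have bf: "bij_betw f ({..<k} \<times> UNIV) UNIV"
    unfolding bij_betw_def
  proof
    show "inj_on f ({..<k} \<times> UNIV)"
      using dec' unfolding inj_on_def f_def bij_betw_def by auto
    show "f ` ({..<k} \<times> UNIV) = UNIV"
    proof (rule set_eqI, rule iffI)
      fix y :: "'b \<times> 'c"
      obtain b c where y: "y = (b, c)" by (cases y)
      obtain n where "n \<in> {..<k}" "dec n = c" using dec' unfolding bij_betw_def by (metis UNIV_I imageE)
      then show "y \<in> f ` ({..<k} \<times> UNIV)" unfolding f_def y by force
    qed simp
  qed
  define X where "X = (\<lambda>i j. Q (f j) (f i))"
  have Q': "psd_on UNIV Q" using Q unfolding psd_def .
  have "psd_on ({..<k} \<times> UNIV) X"
    using psd_transpose[OF psd_reindex[OF Q' bf]] unfolding X_def by simp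
  then have Y: "psd_on ({..<k} \<times> UNIV) (ampl N X)"
    using cp unfolding completely_positive_def by blast
  have "0 \<le> (\<Sum>i\<in>{..<k} \<times> UNIV. \<Sum>j\<in>{..<k} \<times> UNIV. cnj ((\<lambda>(n, x). if x = dec n then 1 else 0) i) * ampl N X i j * (\<lambda>(n, x). if x = dec n then 1 else 0) j)"
    by (rule psd_quad[OF Y])
  also have "\<dots> = (\<Sum>n\<in>{..<k}. \<Sum>n'\<in>{..<k}. ampl N X (n, dec n) (n', dec n'))"
    by (rule sel_sum)
  also have "\<dots> = (\<Sum>n\<in>{..<k}. \<Sum>n'\<in>{..<k}. N (\<lambda>b b'. Q (b', dec n') (b, dec n)) (dec n) (dec n'))"
    by (simp add: ampl_def X_def f_def)
  also have "\<dots> = (\<Sum>n\<in>{..<k}. \<Sum>c'\<in>UNIV. N (\<lambda>b b'. Q (b', c') (b, dec n)) (dec n) c')"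
    by (intro sum.cong refl sum.reindex_bij_betw[OF dec'])
  also have "\<dots> = (\<Sum>c\<in>UNIV. \<Sum>c'\<in>UNIV. N (\<lambda>b b'. Q (b', c') (b, c)) c c')"
    by (rule sum.reindex_bij_betw[OF dec', where g = "\<lambda>c. \<Sum>c'\<in>UNIV. N (\<lambda>b b'. Q (b', c') (b, c)) c c'"])
  finally show ?thesis .
qed

lemma mult_if1: "(if P then y else 0) * (x::complex) = (if P then y * x else 0)" by simp
lemma mult_if2: "(x::complex) * (if P then y else 0) = (if P then x * y else 0)" by simp

lemma sum_if_const: "(\<Sum>x\<in>A. if P then f x else 0) = (if P then (\<Sum>x\<in>A. f x) else (0::complex))"
  by simp

lemma sum_prod_UNIV: "(\<Sum>x\<in>(UNIV::('a::finite \<times> 'b::finite) set). f x) = (\<Sum>a\<in>UNIV. \<Sum>b\<in>UNIV. f (a, b))"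
proof -
  have "(\<Sum>a\<in>UNIV. \<Sum>b\<in>UNIV. f (a, b)) = sum (\<lambda>(a, b). f (a, b)) ((UNIV::'a set) \<times> (UNIV::'b set))"
    by (rule sum.cartesian_product)
  then show ?thesis by simp
qed

theorem mainTheorem3:
  fixes N10 :: "('i0::finite) op \<Rightarrow> ('i1::finite) op"
    and N20 :: "'i0 op \<Rightarrow> ('i2::finite) op"
    and W :: "('i0 \<times> 'i2) op"
    and Psi0 Psi1 :: "'i0 op"
    and Lam :: "'i1 op"
  assumes cptp10: "CPTP N10"
    and cptp20: "CPTP N20"
    and factor: "\<exists>N21 :: 'i1 op \<Rightarrow> 'i2 op. CPTP N21 \<and> N20 = N21 \<circ> N10"
    and blockpsd: "psd (block (tensor Psi0 ident) W (adj W) (tensor Psi1 ident))"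
    and tr0: "tr Psi0 = 1"
    and tr1: "tr Psi1 = 1"
    and lamc: "op_le (tensor Lam (ident :: 'i2 op))
                 (\<lambda>x y. - ptrace0 (mmult (ext_rho (choi N10) :: ('i0 \<times> 'i1 \<times> 'i2) op)
                                         (ext_W W)) x y)"
  shows "tr (mmult W (choi N20)) + tr Lam \<le> 0"
proof -
  obtain N21 :: "'i1 op \<Rightarrow> 'i2 op" where c21: "CPTP N21" and fac: "N20 = N21 \<circ> N10"
    using factor by blast
  have lin21: "linear_map N21" and cp21: "completely_positive N21" and tp21: "trace_preserving N21"
    using c21 unfolding CPTP_def by auto
  define J where "J = (\<lambda>b b'. N21 (\<lambda>i j. if i = b \<and> j = b' then 1 else 0))"
  define K where "K = (\<lambda>a a2. N10 (\<lambda>i j. if i = a \<and> j = a2 then 1 else 0))"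
  have N21e: "\<And>Z. N21 Z = (\<lambda>x y. \<Sum>b\<in>UNIV. \<Sum>b'\<in>UNIV. Z b b' * J b b' x y)"
    unfolding J_def by (rule expand[OF lin21])
  have Mform: "\<And>b' c' b c. ptrace0 (mmult (ext_rho (choi N10) :: ('i0 \<times> 'i1 \<times> 'i2) op) (ext_W W)) (b', c') (b, c)
      = (\<Sum>a\<in>UNIV. \<Sum>a2\<in>UNIV. K a a2 b b' * W (a2, c') (a, c))"
    by (simp add: ptrace0_def mmult_def ext_rho_def ext_W_def ptranspose2_def choi_def ident_def
        sum_prod_UNIV K_def mult_if1 mult_if2 sum_if_const sum.delta sum.delta' cong: if_cong)
  define P :: "('i1 \<times> 'i2) op" where "P = (\<lambda>x y. - ptrace0 (mmult (ext_rho (choi N10) :: ('i0 \<times> 'i1 \<times> 'i2) op) (ext_W W)) x y - tensor Lam ident x y)"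
  have psdP: "psd P" using lamc unfolding op_le_def P_def .
  have Pform: "\<And>b' c' b c. P (b', c') (b, c) = - (\<Sum>a\<in>UNIV. \<Sum>a2\<in>UNIV. K a a2 b b' * W (a2, c') (a, c)) - Lam b' b * (if c' = c then 1 else 0)"
    by (simp add: P_def Mform tensor_def ident_def)
  have S0: "0 \<le> (\<Sum>c\<in>UNIV. \<Sum>c'\<in>UNIV. N21 (\<lambda>b b'. P (b', c') (b, c)) c c')"
    by (rule cp_quad[OF cp21 psdP])
  define S1 where "S1 = (\<Sum>c\<in>UNIV. \<Sum>c'\<in>UNIV. \<Sum>b\<in>UNIV. \<Sum>b'\<in>UNIV. (\<Sum>a\<in>UNIV. \<Sum>a2\<in>UNIV. K a a2 b b' * W (a2, c') (a, c)) * J b b' c c')"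
  define S2 where "S2 = (\<Sum>c\<in>UNIV. \<Sum>c'\<in>UNIV. \<Sum>b\<in>UNIV. \<Sum>b'\<in>UNIV. Lam b' b * (if c' = c then 1 else 0) * J b b' c c')"
  have S_eq: "(\<Sum>c\<in>UNIV. \<Sum>c'\<in>UNIV. N21 (\<lambda>b b'. P (b', c') (b, c)) c c') = - S1 - S2"
    unfolding S1_def S2_def
    by (simp add: N21e Pform left_diff_distrib sum_subtractf sum_negf)
  have trJ: "tr (J b b') = (if b = b' then 1 else 0)" for b b'
  proof -
    have "tr (J b b') = tr (\<lambda>i j. if i = b \<and> j = b' then 1 else 0 :: complex)"
      using tp21 unfolding J_def trace_preserving_def by blast
    also have "\<dots> = (if b = b' then 1 else 0)"
      by (cases "b = b'") (auto simp: tr_def intro!: sum.neutral)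
    finally show ?thesis .
  qed
  have S2_eq: "S2 = tr Lam"
  proof -
    have "S2 = (\<Sum>c\<in>UNIV. \<Sum>c'\<in>UNIV. if c' = c then (\<Sum>b\<in>UNIV. \<Sum>b'\<in>UNIV. Lam b' b * J b b' c c') else 0)"
      unfolding S2_def by (intro sum.cong refl) auto
    also have "\<dots> = (\<Sum>c\<in>UNIV. \<Sum>b\<in>UNIV. \<Sum>b'\<in>UNIV. Lam b' b * J b b' c c)"
      by (simp add: sum.delta')
    also have "\<dots> = (\<Sum>b\<in>UNIV. \<Sum>c\<in>UNIV. \<Sum>b'\<in>UNIV. Lam b' b * J b b' c c)"
      by (rule sum.swap)
    also have "\<dots> = (\<Sum>b\<in>UNIV. \<Sum>b'\<in>UNIV. \<Sum>c\<in>UNIV. Lam b' b * J b b' c c)"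
      by (intro sum.cong refl) (rule sum.swap)
    also have "\<dots> = (\<Sum>b\<in>UNIV. \<Sum>b'\<in>UNIV. Lam b' b * tr (J b b'))"
      by (simp add: tr_def sum_distrib_left)
    also have "\<dots> = (\<Sum>b\<in>UNIV. Lam b b)"
      by (simp add: trJ mult_if2 sum.delta sum.delta')
    also have "\<dots> = tr Lam"
      by (simp add: tr_def)
    finally show ?thesis .
  qed
  define G where "G = (\<lambda>(a, c, a2, c2, b, b'). W (a, c) (a2, c2) * (K a2 a b b' * J b b' c2 c))"
  define H where "H = (\<lambda>(c, c', b, b', a, a2). K a a2 b b' * W (a2, c') (a, c) * J b b' c c')"
  have T6: "tr (mmult W (choi N20)) = (\<Sum>a\<in>UNIV. \<Sum>c\<in>UNIV. \<Sum>a2\<in>UNIV. \<Sum>c2\<in>UNIV. \<Sum>b\<in>UNIV. \<Sum>b'\<in>UNIV. W (a, c) (a2, c2) * (K a2 a b b' * J b b' c2 c))"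
    by (simp add: tr_def mmult_def choi_def fac N21e K_def sum_prod_UNIV sum_distrib_left)
  also have "\<dots> = (\<Sum>q\<in>UNIV. G q)"
    by (simp add: G_def sum_prod_UNIV)
  also have "\<dots> = (\<Sum>q\<in>UNIV. H q)"
    by (rule sum.reindex_bij_witness[where j = "\<lambda>(a, c, a2, c2, b, b'). (c2, c, b, b', a2, a)"
          and i = "\<lambda>(c, c', b, b', a, a2). (a2, c', a, c, b, b')"]) (auto simp: G_def H_def)
  also have "\<dots> = S1"
    unfolding S1_def by (simp add: H_def sum_prod_UNIV sum_distrib_right)
  finally have T_eq: "tr (mmult W (choi N20)) = S1" .
  have "0 \<le> - (tr (mmult W (choi N20)) + tr Lam)"
    using S0 S_eq T_eq S2_eq by simp
  then show ?thesis by (simp add: less_eq_complex_def)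
qed

end
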